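(* Let $\ell\ge 1$ be a fixed integer and let $k=\max(2,\ell)$. Then the polynomial $P(x)=(2k-3)x^{2k+2}+(1-2k)x^{2k}+x^4-2x^2+1$ has a unique root $\tau$ in the open interval $(0,1)$. Moreover, every graph with maximum degree $\Delta\ge 2$ and girth at least $2\ell+1$ has an acyclic edge-coloring with at most $\lceil(2+\gamma)(\Delta-1)\rceil$ colors, where $\gamma=(\tau^{2k}-\tau^2+1)/(\tau-\tau^3)$.
   Context: An edge-coloring of a graph is acyclic if it is proper (adjacent edges receive different colors) and every cycle contains at least three colors. The girth of a graph is the length of a shortest cycle ($+\infty$ if the graph is acyclic). Graphs are finite. *)

theory Defs
  imports Complex_Main
begin

definition graph :: "'a set \<Rightarrow> 'a set set \<Rightarrow> bool" where
  "graph V E \<longleftrightarrow> finite V \<and> (\<forall>e\<in>E. e \<subseteq> V \<and> card e = 2)"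

definition degree :: "'a set set \<Rightarrow> 'a \<Rightarrow> nat" where
  "degree E v = card {e \<in> E. v \<in> e}"

definition max_degree :: "'a set \<Rightarrow> 'a set set \<Rightarrow> nat" where
  "max_degree V E = Max (insert 0 (degree E ` V))"

definition cycle_edges :: "'a list \<Rightarrow> 'a set set" where
  "cycle_edges cs = {{cs ! i, cs ! ((i + 1) mod length cs)} | i. i < length cs}"

definition is_cycle :: "'a set \<Rightarrow> 'a set set \<Rightarrow> 'a list \<Rightarrow> bool" where
  "is_cycle V E cs \<longleftrightarrow> length cs \<ge> 3 \<and> distinct cs \<and> set cs \<subseteq> V \<and> cycle_edges cs \<subseteq> E"

text \<open>Girth at least g: every cycle has length at least g (vacuous for forests,
  whose girth is +\<infinity>).\<close>
definition girth_at_least :: "'a set \<Rightarrow> 'a set set \<Rightarrow> nat \<Rightarrow> bool" where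
  "girth_at_least V E g \<longleftrightarrow> (\<forall>cs. is_cycle V E cs \<longrightarrow> length cs \<ge> g)"

definition proper_edge_coloring :: "'a set set \<Rightarrow> ('a set \<Rightarrow> 'c) \<Rightarrow> bool" where
  "proper_edge_coloring E c \<longleftrightarrow>
     (\<forall>e\<in>E. \<forall>f\<in>E. e \<noteq> f \<and> e \<inter> f \<noteq> {} \<longrightarrow> c e \<noteq> c f)"

definition acyclic_edge_coloring :: "'a set \<Rightarrow> 'a set set \<Rightarrow> ('a set \<Rightarrow> 'c) \<Rightarrow> bool" where
  "acyclic_edge_coloring V E c \<longleftrightarrow> proper_edge_coloring E c \<and>
     (\<forall>cs. is_cycle V E cs \<longrightarrow> card (c ` cycle_edges cs) \<ge> 3)"

definition acyclic_colorable :: "'a set \<Rightarrow> 'a set set \<Rightarrow> nat \<Rightarrow> bool" where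
  "acyclic_colorable V E m \<longleftrightarrow>
     (\<exists>c :: 'a set \<Rightarrow> nat. c ` E \<subseteq> {..<m} \<and> acyclic_edge_coloring V E c)"

definition polyP :: "nat \<Rightarrow> real \<Rightarrow> real" where
  "polyP k x = (2 * real k - 3) * x ^ (2*k+2) + (1 - 2 * real k) * x ^ (2*k) + x^4 - 2 * x^2 + 1"

end

theory Submission
  imports Defs "HOL-Library.FuncSet"
begin


lemma D_mono:
  fixes k :: nat and a b :: real
  assumes k: "k \<ge> 2" and ab: "0 < a" "a < b" "b < 1"
  shows "(2*real k - 1) * a^(2*k) - (2*real k - 3) * a^(2*k+2) < (2*real k - 1) * b^(2*k) - (2*real k - 3) * b^(2*k+2)"
proof -
  let ?f = "\<lambda>x::real. (2*real k - 1) * x^(2*k) - (2*real k - 3) * x^(2*k+2)"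
  have "?f a < ?f b"
  proof (rule DERIV_pos_imp_increasing[OF ab(2)])
    fix x assume x: "a \<le> x" "x \<le> b"
    have d0: "DERIV ?f x :> (2*real k - 1) * (real (2*k) * x^(2*k - Suc 0)) - (2*real k - 3) * (real (2*k+2) * x^(2*k+2 - Suc 0))"
      by (rule derivative_eq_intros refl)+ simp
    have d: "DERIV ?f x :> (2*real k - 1) * (real (2*k) * x^(2*k-1)) - (2*real k - 3) * (real (2*k+2) * x^(2*k+1))"
      using d0 by simp
    have x0: "0 < x" "x < 1" using x ab by auto
    have e: "x^(2*k+1) = x^(2*k-1) * x^2" using k by (simp add: power_add[symmetric])
    have eq: "(2*real k - 1) * (real (2*k) * x^(2*k-1)) - (2*real k - 3) * (real (2*k+2) * x^(2*k+1))
        = x^(2*k-1) * ((2*real k - 1) * (2*real k) - (2*real k - 3) * (2*real k+2) * x^2)"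
      unfolding e by (simp add: algebra_simps)
    have "x^2 < 1" using x0 by (simp add: power_less_one_iff)
    moreover have "0 \<le> (2*real k - 3) * (2*real k+2)" using k by simp
    ultimately have "x^(2*k-1) * ((2*real k - 1) * (2*real k) - (2*real k - 3) * (2*real k+2) * x^2) > 0"
    proof -
      assume h: "x^2 < 1" "0 \<le> (2*real k - 3) * (2*real k+2)"
      have "(2*real k - 3) * (2*real k+2) * x^2 \<le> (2*real k - 3) * (2*real k+2)"
        using h by (simp add: mult_left_le less_imp_le)
      moreover have "(2*real k - 1) * (2*real k) - (2*real k - 3) * (2*real k+2) = 6" by (simp add: algebra_simps)
      ultimately have "(2*real k - 1) * (2*real k) - (2*real k - 3) * (2*real k+2) * x^2 > 0" by linarith
      thus ?thesis using x0 by (intro mult_pos_pos) auto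
    qed
    thus "\<exists>y. DERIV ?f x :> y \<and> y > 0" using d eq by auto
  qed
  thus ?thesis by simp
qed

lemma polyP_alt: "polyP k x = (1 - x^2)^2 - ((2*real k - 1) * x^(2*k) - (2*real k - 3) * x^(2*k+2))"
  unfolding polyP_def by (simp add: power2_eq_square algebra_simps power4_eq_xxxx)

lemma polyP_unique_root:
  fixes k :: nat assumes k: "k \<ge> 2"
  shows "\<exists>!\<tau>::real. 0 < \<tau> \<and> \<tau> < 1 \<and> polyP k \<tau> = 0"
proof (rule ex_ex1I)
  have c: "\<forall>x. 0 \<le> x \<and> x \<le> 1 \<longrightarrow> isCont (polyP k) x"
    unfolding polyP_def by (auto intro!: continuous_intros)
  have p0: "polyP k 0 = 1" using k by (simp add: polyP_def)
  have p1: "polyP k 1 = -2" by (simp add: polyP_def)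
  obtain x where x: "0 \<le> x" "x \<le> 1" "polyP k x = 0"
    using IVT2[of "polyP k" 1 0 0, OF _ _ _ c] p0 p1 by auto
  then have "x \<noteq> 0" "x \<noteq> 1" using p0 p1 by auto
  with x show "\<exists>\<tau>::real. 0 < \<tau> \<and> \<tau> < 1 \<and> polyP k \<tau> = 0" by (intro exI[of _ x]) auto
next
  fix a b :: real
  assume a: "0 < a \<and> a < 1 \<and> polyP k a = 0" and b: "0 < b \<and> b < 1 \<and> polyP k b = 0"
  show "a = b"
  proof (rule ccontr)
    assume ne: "a \<noteq> b"
    have key: False if xy: "0 < x" "x < y" "y < 1" "polyP k x = 0" "polyP k y = 0" for x y :: real
    proof -
      have "(1 - y^2)^2 < (1 - x^2)^2"
      proof -
        have "x^2 < y^2" using xy by (simp add: power_strict_mono)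
        moreover have "y^2 < 1" using xy by (simp add: power_less_one_iff)
        ultimately have "0 < 1 - y^2" "1 - y^2 < 1 - x^2" by auto
        thus ?thesis by (simp add: power_strict_mono)
      qed
      thus False using D_mono[OF k xy(1-3)] xy(4,5) unfolding polyP_alt by linarith
    qed
    show False
    proof (cases "a < b")
      case True thus ?thesis using key[of a b] a b by auto
    next
      case False thus ?thesis using key[of b a] a b ne by auto
    qed
  qed
qed


definition Ed :: "'a list \<Rightarrow> nat \<Rightarrow> 'a set" where
  "Ed cs i = {cs!i, cs!((i+1) mod length cs)}"

lemma cycle_edges_Ed: "cycle_edges cs = Ed cs ` {..<length cs}"
  unfolding cycle_edges_def Ed_def by auto

lemma inj_Ed:
  assumes d: "distinct cs" and n: "length cs \<ge> 3"
  shows "inj_on (Ed cs) {..<length cs}"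
proof
  fix i j assume i: "i \<in> {..<length cs}" and j: "j \<in> {..<length cs}" and eq: "Ed cs i = Ed cs j"
  let ?n = "length cs"
  have ij: "\<And>a b. a < ?n \<Longrightarrow> b < ?n \<Longrightarrow> cs!a = cs!b \<longleftrightarrow> a = b"
    using d by (simp add: nth_eq_iff_index_eq)
  have n0: "?n > 0" using n by linarith
  have m: "\<And>a. (a+1) mod ?n < ?n" using n0 by simp
  show "i = j"
  proof (rule ccontr)
    assume ne: "i \<noteq> j"
    have "cs!i \<in> Ed cs j" using eq unfolding Ed_def by auto
    hence "cs!i = cs!((j+1) mod ?n)" using ne ij i j unfolding Ed_def by auto
    hence 1: "i = (j+1) mod ?n" using ij i m by auto
    have "cs!j \<in> Ed cs i" using eq unfolding Ed_def by auto
    hence "cs!j = cs!((i+1) mod ?n)" using ne ij i j unfolding Ed_def by auto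
    hence 2: "j = (i+1) mod ?n" using ij j m by auto
    show False
    proof (cases "j+1 < ?n")
      case True
      then have ij1: "i = j+1" using 1 by simp
      show False
      proof (cases "i+1 < ?n")
        case True
        then have "(i+1) mod ?n = i+1" by simp
        then show False using 2 ij1 by linarith
      next
        case False
        then have "i + 1 = ?n" using i by simp
        then have "j = 0" using 2 by simp
        then show False using ij1 \<open>i+1 = ?n\<close> n by simp
      qed
    next
      case False
      then have "j + 1 = ?n" using j by simp
      then have "i = 0" using 1 by simp
      then show False using 2 n \<open>j+1 = ?n\<close> by simp
    qed
  qed
qed

lemma card_cycle_edges:
  assumes "distinct cs" "length cs \<ge> 3"
  shows "card (cycle_edges cs) = length cs"
  unfolding cycle_edges_Ed using card_image[OF inj_Ed[OF assms]] by simp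

lemma Ed_rotate1:
  assumes "i < length cs"
  shows "Ed (rotate1 cs) i = Ed cs ((i+1) mod length cs)"
proof -
  have n: "length cs > 0" using assms by linarith
  have a: "rotate1 cs ! i = cs ! (Suc i mod length cs)" using nth_rotate1[OF assms] .
  have b: "rotate1 cs ! ((i+1) mod length cs) = cs ! (Suc ((i+1) mod length cs) mod length cs)"
    using nth_rotate1[of "(i+1) mod length cs" cs] n by simp
  show ?thesis unfolding Ed_def length_rotate1 a b by simp
qed

lemma cycle_edges_rotate1: "cycle_edges (rotate1 cs) = cycle_edges cs"
proof (cases "cs = []")
  case True thus ?thesis by simp
next
  case False
  let ?n = "length cs"
  have n: "?n > 0" using False by simp
  have "Ed (rotate1 cs) ` {..<?n} = Ed cs ` {..<?n}"
  proof
    show "Ed (rotate1 cs) ` {..<?n} \<subseteq> Ed cs ` {..<?n}"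
      using Ed_rotate1 n by fastforce
  next
    show "Ed cs ` {..<?n} \<subseteq> Ed (rotate1 cs) ` {..<?n}"
    proof
      fix f assume "f \<in> Ed cs ` {..<?n}"
      then obtain j where j: "j < ?n" "f = Ed cs j" by auto
      show "f \<in> Ed (rotate1 cs) ` {..<?n}"
      proof (cases j)
        case 0
        have "Ed (rotate1 cs) (?n - 1) = Ed cs 0" using Ed_rotate1[of "?n - 1" cs] n by simp
        moreover have "?n - 1 \<in> {..<?n}" using n by auto
        ultimately show ?thesis unfolding j(2) 0 by (metis image_eqI)
      next
        case (Suc i)
        have "Ed (rotate1 cs) i = Ed cs j" using Ed_rotate1[of i cs] j Suc by simp
        moreover have "i \<in> {..<?n}" using j Suc by auto
        ultimately show ?thesis unfolding j(2) by (metis image_eqI)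
      qed
    qed
  qed
  thus ?thesis unfolding cycle_edges_Ed by simp
qed

lemma cycle_edges_rotate: "cycle_edges (rotate r cs) = cycle_edges cs"
  by (induction r) (simp_all add: cycle_edges_rotate1)

lemma cycle_edges_rev: "cycle_edges (rev cs) = cycle_edges cs"
proof (cases "cs = []")
  case True thus ?thesis by simp
next
  case False
  let ?n = "length cs"
  have n: "?n > 0" using False by simp
  have A: "Ed (rev cs) i = Ed cs (?n - 2 - i)" if i: "i + 1 < ?n" for i
  proof -
    have 1: "rev cs ! i = cs ! (?n - Suc i)" using i by (simp add: rev_nth)
    have 2: "(i+1) mod ?n = i + 1" using i by simp
    have 3: "rev cs ! (i+1) = cs ! (?n - 2 - i)" using i by (simp add: rev_nth)
    have 4: "(?n - 2 - i + 1) mod ?n = ?n - Suc i" using i by simp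
    show ?thesis unfolding Ed_def length_rev 2 4 1 3 by blast
  qed
  have B: "Ed (rev cs) (?n - 1) = Ed cs (?n - 1)"
  proof -
    have 1: "rev cs ! (?n - 1) = cs ! 0" using n by (simp add: rev_nth)
    have 2: "(?n - 1 + 1) mod ?n = 0" using n by simp
    have 3: "rev cs ! 0 = cs ! (?n - 1)" using n by (simp add: rev_nth)
    show ?thesis unfolding Ed_def length_rev 2 1 3 by blast
  qed
  have "Ed (rev cs) ` {..<?n} = Ed cs ` {..<?n}"
  proof
    show "Ed (rev cs) ` {..<?n} \<subseteq> Ed cs ` {..<?n}"
    proof
      fix f assume "f \<in> Ed (rev cs) ` {..<?n}"
      then obtain i where i: "i < ?n" "f = Ed (rev cs) i" by auto
      show "f \<in> Ed cs ` {..<?n}"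
      proof (cases "i + 1 < ?n")
        case True thus ?thesis using A i by auto
      next
        case False then have "i = ?n - 1" using i by simp
        thus ?thesis using B i n by auto
      qed
    qed
  next
    show "Ed cs ` {..<?n} \<subseteq> Ed (rev cs) ` {..<?n}"
    proof
      fix f assume "f \<in> Ed cs ` {..<?n}"
      then obtain j where j: "j < ?n" "f = Ed cs j" by auto
      show "f \<in> Ed (rev cs) ` {..<?n}"
      proof (cases "j + 1 < ?n")
        case True
        have e: "?n - 2 - (?n - 2 - j) = j" using True by linarith
        have l: "?n - 2 - j + 1 < ?n" using True by linarith
        have "Ed (rev cs) (?n - 2 - j) = Ed cs (?n - 2 - (?n - 2 - j))" using A[OF l] .
        also have "\<dots> = Ed cs j" by (simp only: e)
        finally have "Ed (rev cs) (?n - 2 - j) = Ed cs j" .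
        moreover have "?n - 2 - j \<in> {..<?n}" using n by auto
        ultimately show ?thesis unfolding j(2) by (metis image_eqI)
      next
        case False then have "j = ?n - 1" using j by simp
        moreover have "?n - 1 \<in> {..<?n}" using n by auto
        ultimately show ?thesis unfolding j(2) using B by (metis image_eqI)
      qed
    qed
  qed
  thus ?thesis unfolding cycle_edges_Ed by simp
qed

lemma is_cycle_rotate: "is_cycle V G (rotate r cs) \<longleftrightarrow> is_cycle V G cs"
  unfolding is_cycle_def by (simp add: cycle_edges_rotate)

lemma is_cycle_rev: "is_cycle V G (rev cs) \<longleftrightarrow> is_cycle V G cs"
  unfolding is_cycle_def by (simp add: cycle_edges_rev)



lemma list_01: "length l \<ge> 2 \<Longrightarrow> l = l!0 # l!1 # drop 2 l"
  by (cases l; cases "tl l") auto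

lemma normalize_cycle:
  assumes c: "is_cycle V G cs" and e: "{u,v} \<in> cycle_edges cs" and uv: "u \<noteq> v"
  shows "\<exists>xs. is_cycle V G (u#v#xs) \<and> cycle_edges (u#v#xs) = cycle_edges cs \<and> length xs + 2 = length cs"
proof -
  let ?n = "length cs"
  have n: "?n \<ge> 3" using c unfolding is_cycle_def by simp
  have ne: "cs \<noteq> []" using n by auto
  have fin: "\<exists>xs. is_cycle V G (u#v#xs) \<and> cycle_edges (u#v#xs) = cycle_edges cs \<and> length xs + 2 = length cs"
    if w: "is_cycle V G w" "w!0 = u" "w!1 = v" "cycle_edges w = cycle_edges cs" "length w = ?n" for w
  proof -
    have eq: "u # v # drop 2 w = w" using list_01[of w] w n by simp
    have l: "length (drop 2 w) + 2 = ?n" using w n by simp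
    show ?thesis
    proof (intro exI[of _ "drop 2 w"] conjI)
      show "is_cycle V G (u # v # drop 2 w)" using w(1) by (simp only: eq)
      show "cycle_edges (u # v # drop 2 w) = cycle_edges cs" using w(4) by (simp only: eq)
    qed (rule l)
  qed
  obtain i where i: "i < ?n" "{u,v} = Ed cs i" using e unfolding cycle_edges_Ed by auto
  show ?thesis
  proof (cases "cs!i = u")
    case True
    then have v: "cs!((i+1) mod ?n) = v" using i(2) uv unfolding Ed_def by (auto simp: doubleton_eq_iff)
    let ?w = "rotate i cs"
    have "?w!0 = u" using nth_rotate[of 0 cs i] True i ne by simp
    moreover have "?w!1 = v" using nth_rotate[of 1 cs i] v n by simp
    ultimately show ?thesis using fin[of ?w] c by (simp add: is_cycle_rotate cycle_edges_rotate)
  next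
    case False
    then have u: "cs!((i+1) mod ?n) = u" and v: "cs!i = v"
      using i(2) uv unfolding Ed_def by (auto simp: doubleton_eq_iff)
    let ?r = "(i+1) mod ?n"
    let ?w1 = "rotate ?r cs"
    have a: "?w1!0 = u" using nth_rotate[of 0 cs ?r] u ne by simp
    have "(?r + (?n - 1)) mod ?n = (i + 1 + (?n - 1)) mod ?n" by (simp add: mod_add_left_eq)
    also have "i + 1 + (?n - 1) = i + ?n" using n by simp
    also have "(i + ?n) mod ?n = i" using i by simp
    finally have r: "(?r + (?n - 1)) mod ?n = i" .
    have b: "?w1!(?n - 1) = v" using nth_rotate[of "?n - 1" cs ?r] r v n by simp
    let ?w = "rotate (?n - 1) (rev ?w1)"
    have "?w!0 = rev ?w1 ! (?n - 1)" using nth_rotate[of 0 "rev ?w1" "?n - 1"] ne by simp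
    also have "\<dots> = ?w1 ! 0" using n by (simp add: rev_nth)
    finally have w0: "?w!0 = u" using a by simp
    have nn: "Suc (?n - Suc 0) = ?n" using n by simp
    have "?w!1 = rev ?w1 ! 0" using nth_rotate[of 1 "rev ?w1" "?n - 1"] n nn by simp
    also have "\<dots> = ?w1 ! (?n - 1)" using ne by (simp add: rev_nth)
    finally have w1: "?w!1 = v" using b by simp
    show ?thesis using fin[of ?w] c w0 w1
      by (simp add: is_cycle_rotate cycle_edges_rotate is_cycle_rev cycle_edges_rev)
  qed
qed

lemma alternation:
  assumes d: "distinct w" and n: "length w \<ge> 3"
    and pr: "proper_edge_coloring G c" and sub: "cycle_edges w \<subseteq> G"
    and two: "card (c ` cycle_edges w) \<le> 2"
  shows "\<forall>i < length w. c (Ed w i) = (if even i then c (Ed w 0) else c (Ed w 1))"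
    and "even (length w)"
proof -
  let ?n = "length w"
  have inj: "inj_on (Ed w) {..<?n}" using inj_Ed[OF d n] .
  have inE: "\<And>i. i < ?n \<Longrightarrow> Ed w i \<in> cycle_edges w" unfolding cycle_edges_Ed by auto
  have wne: "w \<noteq> []" using n by auto
  have adj: "c (Ed w i) \<noteq> c (Ed w j)" if "i < ?n" "j < ?n" "i \<noteq> j" "Ed w i \<inter> Ed w j \<noteq> {}" for i j
  proof -
    have "Ed w i \<noteq> Ed w j" using inj that unfolding inj_on_def by auto
    thus ?thesis using pr that sub inE unfolding proper_edge_coloring_def by blast
  qed
  have cons: "c (Ed w (i+1)) \<noteq> c (Ed w i)" if "i + 1 < ?n" for i
  proof -
    have "w!(i+1) \<in> Ed w i \<inter> Ed w (i+1)" using that unfolding Ed_def by simp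
    thus ?thesis using adj[of "i+1" i] that by auto
  qed
  have fin: "finite (c ` cycle_edges w)" unfolding cycle_edges_Ed by simp
  have c01: "c (Ed w 1) \<noteq> c (Ed w 0)" using cons[of 0] n by simp
  have set: "c ` cycle_edges w = {c (Ed w 0), c (Ed w 1)}"
  proof -
    have sub2: "{c (Ed w 0), c (Ed w 1)} \<subseteq> c ` cycle_edges w" using inE[of 0] inE[of 1] n wne by (simp add: Suc_le_eq)
    have "card {c (Ed w 0), c (Ed w 1)} = 2" using c01 by simp
    thus ?thesis using card_subset_eq[OF fin sub2] two card_mono[OF fin sub2] by simp
  qed
  show alt: "\<forall>i < ?n. c (Ed w i) = (if even i then c (Ed w 0) else c (Ed w 1))"
  proof (intro allI impI)
    fix i assume "i < ?n"
    then show "c (Ed w i) = (if even i then c (Ed w 0) else c (Ed w 1))"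
    proof (induction i)
      case 0 thus ?case by simp
    next
      case (Suc i)
      have IH: "c (Ed w i) = (if even i then c (Ed w 0) else c (Ed w 1))" using Suc by simp
      have "c (Ed w (Suc i)) \<in> {c (Ed w 0), c (Ed w 1)}" using set inE[OF Suc.prems] by auto
      moreover have "c (Ed w (Suc i)) \<noteq> c (Ed w i)" using cons[of i] Suc.prems by simp
      ultimately show ?case using IH c01 by (auto split: if_splits)
    qed
  qed
  show "even ?n"
  proof (rule ccontr)
    assume odd: "odd ?n"
    have nn: "Suc (?n - Suc 0) = ?n" using n by simp
    have m: "(?n - 1 + 1) mod ?n = 0" using nn by simp
    have "w!0 \<in> Ed w (?n - 1) \<inter> Ed w 0" unfolding Ed_def m by simp
    then have "c (Ed w (?n - 1)) \<noteq> c (Ed w 0)" using adj[of "?n - 1" 0] n wne by auto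
    moreover have "even (?n - 1)" using odd n by simp
    ultimately show False using alt n by auto
  qed
qed



fun nbw :: "'a set set \<Rightarrow> 'a \<Rightarrow> 'a \<Rightarrow> 'a list \<Rightarrow> bool" where
  "nbw E p w [] = True"
| "nbw E p w (y#ys) = ({w,y} \<in> E \<and> y \<noteq> p \<and> nbw E w y ys)"

lemma walks_Suc:
  "{ys. length ys = Suc m \<and> nbw E p w ys} =
   (\<Union>y\<in>{y. {w,y} \<in> E \<and> y \<noteq> p}. (#) y ` {ys. length ys = m \<and> nbw E w y ys})"
  by (auto simp: length_Suc_conv)

lemma walks_card:
  assumes g: "graph V E" and deg: "\<forall>x\<in>V. degree E x \<le> Suc d" and pw: "{p,w} \<in> E"
  shows "finite {ys. length ys = m \<and> nbw E p w ys} \<and> card {ys. length ys = m \<and> nbw E p w ys} \<le> d^m"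
  using pw
proof (induction m arbitrary: p w)
  case 0
  have "{ys. length ys = 0 \<and> nbw E p w ys} = {[]}" by auto
  thus ?case by simp
next
  case (Suc m)
  have "E \<subseteq> Pow V" using g unfolding graph_def by auto
  moreover have "finite V" using g unfolding graph_def by blast
  ultimately have finE: "finite E" using finite_subset by blast
  let ?Nb = "{y. {w,y} \<in> E \<and> y \<noteq> p}"
  have E2: "\<And>f. f \<in> E \<Longrightarrow> card f = 2" and EV: "\<And>f. f \<in> E \<Longrightarrow> f \<subseteq> V" using g unfolding graph_def by auto
  have wV: "w \<in> V" using EV[OF Suc.prems] by auto
  have ynw: "y \<noteq> w" if "{w,y} \<in> E" for y using E2[OF that] by auto
  have finNb: "finite ?Nb"
  proof -
    have "?Nb \<subseteq> V" using EV by auto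
    moreover have "finite V" using g unfolding graph_def by blast
    ultimately show ?thesis using finite_subset by blast
  qed
  have cardNb: "card ?Nb \<le> d"
  proof -
    have inj: "inj_on (\<lambda>y. {w,y}) ?Nb"
    proof (rule inj_onI)
      fix y y' assume y: "y \<in> ?Nb" and y': "y' \<in> ?Nb" and eq: "{w,y} = {w,y'}"
      have "y \<in> {w,y'}" using eq by blast
      thus "y = y'" using ynw y by blast
    qed
    have im: "(\<lambda>y. {w,y}) ` ?Nb \<subseteq> {f\<in>E. w \<in> f} - {{p,w}}"
    proof
      fix f assume "f \<in> (\<lambda>y. {w,y}) ` ?Nb"
      then obtain y where y: "y \<in> ?Nb" "f = {w,y}" by blast
      have "{w,y} \<noteq> {p,w}"
      proof
        assume "{w,y} = {p,w}"
        then have "y \<in> {p,w}" by blast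
        thus False using y ynw by blast
      qed
      thus "f \<in> {f\<in>E. w \<in> f} - {{p,w}}" using y by blast
    qed
    have fin2: "finite ({f\<in>E. w \<in> f} - {{p,w}})" using finE by simp
    have "card ?Nb \<le> card ({f\<in>E. w \<in> f} - {{p,w}})" using card_inj_on_le[OF inj im fin2] .
    also have "\<dots> = card {f\<in>E. w \<in> f} - 1" using Suc.prems finE by (simp add: card_Diff_singleton)
    also have "\<dots> \<le> d"
    proof -
      have "card {f\<in>E. w \<in> f} \<le> Suc d" using deg wV unfolding degree_def by blast
      thus ?thesis by simp
    qed
    finally show ?thesis .
  qed
  have IH: "\<And>y. y \<in> ?Nb \<Longrightarrow> finite {ys. length ys = m \<and> nbw E w y ys} \<and> card {ys. length ys = m \<and> nbw E w y ys} \<le> d^m"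
    using Suc.IH by simp
  have fin: "finite {ys. length ys = Suc m \<and> nbw E p w ys}"
    unfolding walks_Suc using finNb IH by (intro finite_UN_I finite_imageI) auto
  have "card {ys. length ys = Suc m \<and> nbw E p w ys} \<le> (\<Sum>y\<in>?Nb. card ((#) y ` {ys. length ys = m \<and> nbw E w y ys}))"
    unfolding walks_Suc by (rule card_UN_le[OF finNb])
  also have "\<dots> \<le> (\<Sum>y\<in>?Nb. d^m)"
  proof (rule sum_mono)
    fix y assume y: "y \<in> ?Nb"
    have "card ((#) y ` {ys. length ys = m \<and> nbw E w y ys}) \<le> card {ys. length ys = m \<and> nbw E w y ys}"
      using IH[OF y] card_image_le by blast
    thus "card ((#) y ` {ys. length ys = m \<and> nbw E w y ys}) \<le> d^m" using IH[OF y] by linarith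
  qed
  also have "\<dots> = card ?Nb * d^m" by simp
  also have "\<dots> \<le> d * d^m" using cardNb by simp
  finally show ?case using fin by simp
qed

lemma nbw_of_path:
  assumes "distinct (p#w#ys)" "\<forall>i. Suc i < length (w#ys) \<longrightarrow> {(w#ys)!i, (w#ys)!Suc i} \<in> E"
  shows "nbw E p w ys"
  using assms
proof (induction ys arbitrary: p w)
  case Nil thus ?case by simp
next
  case (Cons y ys)
  have e: "{w,y} \<in> E" using Cons.prems(2)[rule_format, of 0] by simp
  have d: "distinct (w#y#ys)" using Cons.prems(1) by simp
  have "\<forall>i. Suc i < length (y#ys) \<longrightarrow> {(y#ys)!i, (y#ys)!Suc i} \<in> E"
  proof (intro allI impI)
    fix i assume "Suc i < length (y#ys)"
    then have "Suc (Suc i) < length (w#y#ys)" by simp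
    then have "{(w#y#ys)!Suc i, (w#y#ys)!Suc (Suc i)} \<in> E" using Cons.prems(2) by blast
    thus "{(y#ys)!i, (y#ys)!Suc i} \<in> E" by simp
  qed
  then have "nbw E w y ys" using Cons.IH d by blast
  thus ?case using e Cons.prems(1) by auto
qed

lemma nbw_of_cycle:
  assumes c: "is_cycle V G (u#v#xs)" and GE: "G \<subseteq> E"
  shows "nbw E u v xs"
proof (rule nbw_of_path)
  show "distinct (u#v#xs)" using c unfolding is_cycle_def by simp
  show "\<forall>i. Suc i < length (v#xs) \<longrightarrow> {(v#xs)!i, (v#xs)!Suc i} \<in> E"
  proof (intro allI impI)
    fix i assume i: "Suc i < length (v#xs)"
    have "Ed (u#v#xs) (Suc i) \<in> cycle_edges (u#v#xs)" unfolding cycle_edges_Ed using i by auto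
    moreover have "Ed (u#v#xs) (Suc i) = {(v#xs)!i, (v#xs)!Suc i}"
      unfolding Ed_def using i by simp
    ultimately show "{(v#xs)!i, (v#xs)!Suc i} \<in> E" using c GE unfolding is_cycle_def by auto
  qed
qed



lemma geom_bound:
  fixes t :: real assumes t: "0 < t" "t < 1" and k: "k \<ge> 1"
  shows "(\<Sum>i\<in>{k..K}. t^(2*i-1)) \<le> t^(2*k-1) / (1 - t^2)"
proof -
  have t2: "t^2 < 1" using t by (simp add: power_less_one_iff)
  have eq: "(1 - t^2) * (\<Sum>i\<in>{k..K}. t^(2*i-1)) = (if k \<le> K then t^(2*k-1) - t^(2*K+1) else 0)" for K
  proof (induction K)
    case 0 thus ?case using k by simp
  next
    case (Suc K)
    show ?case
    proof (cases "k \<le> K")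
      case True
      then have s: "{k..Suc K} = insert (Suc K) {k..K}" by auto
      have "(1 - t^2) * (\<Sum>i\<in>{k..Suc K}. t^(2*i-1)) = (1 - t^2) * (\<Sum>i\<in>{k..K}. t^(2*i-1)) + (1-t^2) * t^(2*Suc K - 1)"
        unfolding s by (simp add: algebra_simps)
      also have "\<dots> = t^(2*k-1) - t^(2*K+1) + (1-t^2) * t^(2*K+1)" using Suc True by simp
      also have "\<dots> = t^(2*k-1) - t^(2*Suc K+1)" by (simp add: algebra_simps power2_eq_square)
      finally show ?thesis using True by simp
    next
      case False
      show ?thesis
      proof (cases "k = Suc K")
        case True
        then have s: "{k..Suc K} = {Suc K}" by auto
        show ?thesis unfolding s using True by (simp add: algebra_simps power2_eq_square)
      next
        case False
        then have "{k..Suc K} = {}" using \<open>\<not> k \<le> K\<close> by auto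
        thus ?thesis using False \<open>\<not> k \<le> K\<close> by simp
      qed
    qed
  qed
  have "(1 - t^2) * (\<Sum>i\<in>{k..K}. t^(2*i-1)) \<le> t^(2*k-1)"
    unfolding eq using t by simp
  thus ?thesis using t2 by (simp add: field_simps)
qed

locale ac =
  fixes V :: "'a set" and E :: "'a set set" and N d :: nat and \<tau> :: real and k l :: nat
  assumes g: "graph V E" and deg: "\<forall>x\<in>V. degree E x \<le> Suc d" and d1: "d \<ge> 1"
    and girth: "girth_at_least V E (2*l+1)" and kdef: "k = max 2 l"
    and tau: "0 < \<tau>" "\<tau> < 1"
    and Nbig: "real N \<ge> (2 + 1/\<tau> + \<tau>^(2*k-1)/(1-\<tau>^2)) * real d"
begin

definition Col :: "'a set set \<Rightarrow> ('a set \<Rightarrow> nat) set" where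
  "Col F = {c \<in> F \<rightarrow>\<^sub>E {..<N}. proper_edge_coloring F c \<and>
      (\<forall>cs. is_cycle V F cs \<longrightarrow> 3 \<le> card (c ` cycle_edges cs))}"

definition lam :: real where "lam = real d / \<tau>"

lemma lam_ge1: "lam \<ge> 1"
proof -
  have "real d / \<tau> \<ge> real d" using tau d1 by (simp add: le_divide_eq)
  thus ?thesis unfolding lam_def using d1 by simp
qed

lemma finV: "finite V" using g unfolding graph_def by blast

lemma EPow: "E \<subseteq> Pow V" using g unfolding graph_def by auto

lemma finE: "finite E" using finV EPow finite_subset by blast

lemma E2: "f \<in> E \<Longrightarrow> card f = 2" using g unfolding graph_def by blast

lemma EV: "f \<in> E \<Longrightarrow> f \<subseteq> V" using g unfolding graph_def by blast

lemma finCol: "F \<subseteq> E \<Longrightarrow> finite (Col F)"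
proof -
  assume "F \<subseteq> E"
  then have "finite F" using finE finite_subset by blast
  then have "finite (F \<rightarrow>\<^sub>E {..<N})" by (intro finite_PiE) auto
  thus ?thesis unfolding Col_def by simp
qed

lemma is_cycle_mono: "is_cycle V G cs \<Longrightarrow> G \<subseteq> H \<Longrightarrow> is_cycle V H cs"
  unfolding is_cycle_def by blast

lemma Col_restrict:
  assumes GF: "G \<subseteq> F" and c: "c \<in> Col F"
  shows "restrict c G \<in> Col G"
proof -
  have pi: "c \<in> F \<rightarrow>\<^sub>E {..<N}" and pr: "proper_edge_coloring F c"
    and ac: "\<forall>cs. is_cycle V F cs \<longrightarrow> 3 \<le> card (c ` cycle_edges cs)"
    using c unfolding Col_def by auto
  have "restrict c G \<in> G \<rightarrow>\<^sub>E {..<N}" using pi GF by (auto simp: PiE_iff)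
  moreover have "proper_edge_coloring G (restrict c G)"
    using pr GF unfolding proper_edge_coloring_def by auto
  moreover have "3 \<le> card (restrict c G ` cycle_edges cs)" if cy: "is_cycle V G cs" for cs
  proof -
    have sub: "cycle_edges cs \<subseteq> G" using cy unfolding is_cycle_def by blast
    have "restrict c G ` cycle_edges cs = c ` cycle_edges cs"
      by (rule image_cong) (use sub in auto)
    thus ?thesis using ac is_cycle_mono[OF cy GF] by simp
  qed
  ultimately show ?thesis unfolding Col_def by blast
qed

lemma Col_empty: "Col {} = {\<lambda>x. undefined}"
proof -
  have "\<not> is_cycle V {} cs" for cs
  proof
    assume c: "is_cycle V {} cs"
    then have "length cs \<ge> 3" "cycle_edges cs \<subseteq> {}" unfolding is_cycle_def by auto
    moreover have "Ed cs 0 \<in> cycle_edges cs" using \<open>length cs \<ge> 3\<close> unfolding cycle_edges_Ed by auto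
    ultimately show False by auto
  qed
  thus ?thesis unfolding Col_def proper_edge_coloring_def by auto
qed

lemma Q_lemma:
  assumes P: "\<forall>G \<subseteq> E. card G < card F \<longrightarrow> (\<forall>e\<in>E-G. lam * card (Col G) \<le> card (Col (insert e G)))"
    and FE: "F \<subseteq> E" and SF: "S \<subseteq> F"
  shows "lam ^ card S * card (Col (F - S)) \<le> card (Col F)"
proof -
  have finF: "finite F" using FE finE finite_subset by blast
  have finS: "finite S" using SF finF finite_subset by blast
  show ?thesis using finS SF
  proof (induction S rule: finite_induct)
    case empty thus ?case by simp
  next
    case (insert s S)
    have sF: "s \<in> F" and SF': "S \<subseteq> F" using insert.prems by auto
    have IH: "lam ^ card S * card (Col (F - S)) \<le> card (Col F)" using insert.IH SF' by blast
    let ?G = "F - insert s S"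
    have GE: "?G \<subseteq> E" using FE by blast
    have "?G \<subset> F" using sF by blast
    then have lt: "card ?G < card F" using finF by (simp add: psubset_card_mono)
    have sE: "s \<in> E - ?G" using sF FE by blast
    have ins: "insert s ?G = F - S" using sF insert.hyps by blast
    have st: "lam * card (Col ?G) \<le> card (Col (F - S))" using P GE lt sE ins by metis
    have l0: "lam \<ge> 0" using lam_ge1 by simp
    have "lam ^ card (insert s S) * card (Col ?G) = lam ^ card S * (lam * card (Col ?G))"
      using insert.hyps by simp
    also have "\<dots> \<le> lam ^ card S * card (Col (F - S))"
      using st l0 by (simp add: mult_left_mono)
    also have "\<dots> \<le> card (Col F)" using IH .
    finally show ?case .
  qed
qed

end


locale stp = ac V E N d \<tau> k l for V :: "'a set" and E N d \<tau> k l +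
  fixes F :: "'a set set" and e :: "'a set" and u v :: 'a
  assumes FE: "F \<subseteq> E" and eE: "e \<in> E" and eF: "e \<notin> F" and euv: "e = {u,v}" and uv: "u \<noteq> v"
begin

definition Au :: "('a set \<Rightarrow> nat) \<Rightarrow> nat set" where "Au \<phi> = \<phi> ` {f\<in>F. u \<in> f}"
definition Av :: "('a set \<Rightarrow> nat) \<Rightarrow> nat set" where "Av \<phi> = \<phi> ` {f\<in>F. v \<in> f}"
definition Pr :: "('a set \<Rightarrow> nat) \<Rightarrow> ('a \<times> 'a) set" where
  "Pr \<phi> = {(x1,x2). {v,x1} \<in> F \<and> {u,x2} \<in> F \<and> {x1,x2} \<in> F \<and> \<phi> {v,x1} = \<phi> {u,x2}}"
definition B4 :: "('a set \<Rightarrow> nat) \<Rightarrow> nat set" where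
  "B4 \<phi> = (\<lambda>(x1,x2). \<phi> {x1,x2}) ` Pr \<phi>"
definition Good :: "('a set \<Rightarrow> nat) \<Rightarrow> nat set" where
  "Good \<phi> = {..<N} - (Au \<phi> \<union> Av \<phi> \<union> B4 \<phi>)"
definition GP :: "(('a set \<Rightarrow> nat) \<times> nat) set" where "GP = Sigma (Col F) Good"
definition ext :: "('a set \<Rightarrow> nat) \<times> nat \<Rightarrow> ('a set \<Rightarrow> nat)" where "ext p = (fst p)(e := snd p)"
definition Bad where "Bad = {p \<in> GP. ext p \<notin> Col (insert e F)}"

lemma finF: "finite F" using FE finE finite_subset by blast

lemma uvV: "u \<in> V" "v \<in> V" using EV[OF eE] euv by auto

lemma inc_card: assumes "x \<in> e" shows "card {f\<in>F. x \<in> f} \<le> d"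
proof -
  have xV: "x \<in> V" using assms EV[OF eE] by auto
  have sub: "{f\<in>F. x \<in> f} \<subseteq> {f\<in>E. x \<in> f} - {e}" using FE eF by auto
  have "card {f\<in>F. x \<in> f} \<le> card ({f\<in>E. x \<in> f} - {e})" by (rule card_mono) (use finE sub in auto)
  also have "\<dots> = card {f\<in>E. x \<in> f} - 1" using eE assms finE by (simp add: card_Diff_singleton)
  also have "\<dots> \<le> d" using deg xV unfolding degree_def by fastforce
  finally show ?thesis .
qed

lemma finAu: "finite (Au \<phi>)" unfolding Au_def using finF by simp
lemma finAv: "finite (Av \<phi>)" unfolding Av_def using finF by simp

lemma cardAu: "card (Au \<phi>) \<le> d"
  unfolding Au_def using card_image_le[of "{f\<in>F. u \<in> f}" \<phi>] inc_card[of u] finF euv by simp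
lemma cardAv: "card (Av \<phi>) \<le> d"
  unfolding Av_def using card_image_le[of "{f\<in>F. v \<in> f}" \<phi>] inc_card[of v] finF euv by simp

lemma col_proper: "\<phi> \<in> Col F \<Longrightarrow> f \<in> F \<Longrightarrow> g \<in> F \<Longrightarrow> f \<noteq> g \<Longrightarrow> f \<inter> g \<noteq> {} \<Longrightarrow> \<phi> f \<noteq> \<phi> g"
  unfolding Col_def proper_edge_coloring_def by blast

lemma edge_other: "{x,y} \<in> E \<Longrightarrow> x \<noteq> y" using E2 by fastforce

lemma cardB4:
  assumes \<phi>: "\<phi> \<in> Col F"
  shows "card (B4 \<phi>) \<le> card (Au \<phi> \<inter> Av \<phi>)"
proof -
  let ?h = "\<lambda>(x1::'a,x2::'a). \<phi> {v,x1}"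
  have inj: "inj_on ?h (Pr \<phi>)"
  proof (rule inj_onI)
    fix p q assume p: "p \<in> Pr \<phi>" and q: "q \<in> Pr \<phi>" and eq: "?h p = ?h q"
    obtain x1 x2 where p': "p = (x1,x2)" by (cases p)
    obtain y1 y2 where q': "q = (y1,y2)" by (cases q)
    have px: "{v,x1} \<in> F" "{u,x2} \<in> F" "\<phi> {v,x1} = \<phi> {u,x2}" using p p' unfolding Pr_def by auto
    have qy: "{v,y1} \<in> F" "{u,y2} \<in> F" "\<phi> {v,y1} = \<phi> {u,y2}" using q q' unfolding Pr_def by auto
    have e1: "\<phi> {v,x1} = \<phi> {v,y1}" using eq p' q' by simp
    have "{v,x1} = {v,y1}"
    proof (rule ccontr)
      assume "{v,x1} \<noteq> {v,y1}"
      thus False using col_proper[OF \<phi> px(1) qy(1)] e1 by blast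
    qed
    moreover have "v \<noteq> x1" using edge_other px(1) FE by blast
    ultimately have x1: "x1 = y1" by (metis doubleton_eq_iff)
    have e2: "\<phi> {u,x2} = \<phi> {u,y2}" using e1 px(3) qy(3) by simp
    have "{u,x2} = {u,y2}"
    proof (rule ccontr)
      assume "{u,x2} \<noteq> {u,y2}"
      thus False using col_proper[OF \<phi> px(2) qy(2)] e2 by blast
    qed
    moreover have "u \<noteq> x2" using edge_other px(2) FE by blast
    ultimately have x2: "x2 = y2" by (metis doubleton_eq_iff)
    show "p = q" using p' q' x1 x2 by simp
  qed
  have im: "?h ` Pr \<phi> \<subseteq> Au \<phi> \<inter> Av \<phi>"
  proof
    fix c assume "c \<in> ?h ` Pr \<phi>"
    then obtain x1 x2 where p: "(x1,x2) \<in> Pr \<phi>" "c = \<phi> {v,x1}" by auto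
    have px: "{v,x1} \<in> F" "{u,x2} \<in> F" "\<phi> {v,x1} = \<phi> {u,x2}" using p unfolding Pr_def by auto
    have "c \<in> Av \<phi>" unfolding Av_def p(2) using px(1) by (intro imageI) simp
    moreover have "c \<in> Au \<phi>" unfolding Au_def p(2) px(3) using px(2) by (intro imageI) simp
    ultimately show "c \<in> Au \<phi> \<inter> Av \<phi>" by blast
  qed
  have fin: "finite (Au \<phi> \<inter> Av \<phi>)" using finAu by simp
  have finPr: "finite (Pr \<phi>)" using inj_on_finite[OF inj im fin] .
  have "card (B4 \<phi>) \<le> card (Pr \<phi>)" unfolding B4_def using card_image_le[OF finPr] by blast
  also have "\<dots> \<le> card (Au \<phi> \<inter> Av \<phi>)" using card_inj_on_le[OF inj im fin] .
  finally show ?thesis .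
qed

lemma finB4: "\<phi> \<in> Col F \<Longrightarrow> finite (B4 \<phi>)"
proof -
  assume \<phi>: "\<phi> \<in> Col F"
  have "card (B4 \<phi>) \<le> card (Au \<phi> \<inter> Av \<phi>)" using cardB4[OF \<phi>] .
  show "finite (B4 \<phi>)"
  proof -
    have "Pr \<phi> \<subseteq> {x. {v,x} \<in> F} \<times> {x. {u,x} \<in> F}" unfolding Pr_def by auto
    moreover have "finite {x. {v,x} \<in> F}"
    proof -
      have "{x. {v,x} \<in> F} \<subseteq> V" using FE EV by blast
      thus ?thesis using finV finite_subset by blast
    qed
    moreover have "finite {x. {u,x} \<in> F}"
    proof -
      have "{x. {u,x} \<in> F} \<subseteq> V" using FE EV by blast
      thus ?thesis using finV finite_subset by blast
    qed
    ultimately have "finite (Pr \<phi>)" using finite_subset by blast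
    thus ?thesis unfolding B4_def by simp
  qed
qed

lemma Good_card:
  assumes \<phi>: "\<phi> \<in> Col F"
  shows "real (card (Good \<phi>)) \<ge> real N - 2 * real d"
proof -
  let ?X = "Au \<phi> \<union> Av \<phi> \<union> B4 \<phi>"
  have fX: "finite ?X" using finAu finAv finB4[OF \<phi>] by simp
  have "card ?X \<le> card (Au \<phi> \<union> Av \<phi>) + card (B4 \<phi>)" by (rule card_Un_le)
  also have "\<dots> \<le> card (Au \<phi> \<union> Av \<phi>) + card (Au \<phi> \<inter> Av \<phi>)" using cardB4[OF \<phi>] by simp
  also have "\<dots> = card (Au \<phi>) + card (Av \<phi>)" using card_Un_Int[OF finAu finAv] by simp
  also have "\<dots> \<le> 2 * d" using cardAu[of \<phi>] cardAv[of \<phi>] by simp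
  finally have cX: "card ?X \<le> 2 * d" .
  have "card {..<N} - card ?X \<le> card (Good \<phi>)" unfolding Good_def using diff_card_le_card_Diff[OF fX] .
  then have "N \<le> card (Good \<phi>) + 2 * d" using cX by simp
  then have "real N \<le> real (card (Good \<phi>)) + 2 * real d" by linarith
  thus ?thesis by linarith
qed

lemma finGood: "finite (Good \<phi>)" unfolding Good_def by simp

lemma finGP: "finite GP" unfolding GP_def using finCol[OF FE] finGood by simp

lemma card_GP: "real (card GP) \<ge> real (card (Col F)) * (real N - 2 * real d)"
proof -
  have "card GP = (\<Sum>\<phi>\<in>Col F. card (Good \<phi>))" unfolding GP_def
    using finCol[OF FE] finGood by simp
  then have "real (card GP) = (\<Sum>\<phi>\<in>Col F. real (card (Good \<phi>)))" by simp
  also have "\<dots> \<ge> (\<Sum>\<phi>\<in>Col F. real N - 2 * real d)" by (rule sum_mono) (use Good_card in blast)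
  finally show ?thesis by simp
qed

lemma psi_Pi:
  assumes "\<phi> \<in> Col F" "a \<in> Good \<phi>"
  shows "\<phi>(e := a) \<in> insert e F \<rightarrow>\<^sub>E {..<N}"
proof -
  have pi: "\<phi> \<in> F \<rightarrow>\<^sub>E {..<N}" using assms unfolding Col_def by blast
  have "a < N" using assms(2) unfolding Good_def by auto
  thus ?thesis using pi by (auto simp: PiE_iff extensional_def)
qed

lemma psi_proper:
  assumes \<phi>: "\<phi> \<in> Col F" and a: "a \<in> Good \<phi>"
  shows "proper_edge_coloring (insert e F) (\<phi>(e := a))"
  unfolding proper_edge_coloring_def
proof (intro ballI impI)
  fix f g assume f: "f \<in> insert e F" and g: "g \<in> insert e F" and fg: "f \<noteq> g \<and> f \<inter> g \<noteq> {}"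
  have aA: "a \<notin> Au \<phi>" "a \<notin> Av \<phi>" using a unfolding Good_def by auto
  have key: "\<phi> h \<noteq> a" if "h \<in> F" "h \<inter> e \<noteq> {}" for h
  proof -
    have "u \<in> h \<or> v \<in> h" using that euv by auto
    then have "\<phi> h \<in> Au \<phi> \<or> \<phi> h \<in> Av \<phi>" using that unfolding Au_def Av_def by auto
    thus ?thesis using aA by auto
  qed
  show "(\<phi>(e := a)) f \<noteq> (\<phi>(e := a)) g"
  proof (cases "f = e")
    case True
    then have "g \<in> F" "g \<noteq> e" using g fg by auto
    thus ?thesis using True key[of g] fg by auto
  next
    case False
    show ?thesis
    proof (cases "g = e")
      case True
      then have "f \<in> F" using f False by auto
      thus ?thesis using True False key[of f] fg by auto
    next
      case False2: False
      then have "f \<in> F" "g \<in> F" using f g False by auto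
      thus ?thesis using col_proper[OF \<phi>] fg False False2 by auto
    qed
  qed
qed

lemma ext_inj: "inj_on ext GP"
proof (rule inj_onI)
  fix p q assume p: "p \<in> GP" and q: "q \<in> GP" and eq: "ext p = ext q"
  obtain \<phi> a where p': "p = (\<phi>,a)" by (cases p)
  obtain \<phi>' a' where q': "q = (\<phi>',a')" by (cases q)
  have pi: "\<phi> \<in> F \<rightarrow>\<^sub>E {..<N}" "\<phi>' \<in> F \<rightarrow>\<^sub>E {..<N}" using p q p' q' unfolding GP_def Col_def by auto
  have eq': "\<phi>(e := a) = \<phi>'(e := a')" using eq p' q' unfolding ext_def by simp
  have "a = a'" using fun_cong[OF eq', of e] by simp
  moreover have "\<phi> = \<phi>'"
  proof
    fix x show "\<phi> x = \<phi>' x"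
    proof (cases "x = e")
      case True thus ?thesis using pi eF PiE_arb by metis
    next
      case False thus ?thesis using fun_cong[OF eq', of x] by simp
    qed
  qed
  ultimately show "p = q" using p' q' by simp
qed

lemma card_lower: "real (card (Col (insert e F))) \<ge> real (card GP) - real (card Bad)"
proof -
  have BadGP: "Bad \<subseteq> GP" unfolding Bad_def by blast
  have finB: "finite Bad" using finGP BadGP finite_subset by blast
  have "ext ` (GP - Bad) \<subseteq> Col (insert e F)" unfolding Bad_def by blast
  moreover have "inj_on ext (GP - Bad)" using ext_inj inj_on_subset by blast
  moreover have "finite (Col (insert e F))" using finCol FE eE by simp
  ultimately have "card (GP - Bad) \<le> card (Col (insert e F))" using card_inj_on_le by blast
  moreover have "card (GP - Bad) = card GP - card Bad" using card_Diff_subset[OF finB BadGP] .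
  moreover have "card Bad \<le> card GP" using card_mono[OF finGP BadGP] .
  ultimately show ?thesis by linarith
qed

end


context stp begin

definition wit :: "('a set \<Rightarrow> nat) \<Rightarrow> nat \<Rightarrow> 'a list \<Rightarrow> bool" where
  "wit \<phi> a xs \<longleftrightarrow> is_cycle V (insert e F) (u#v#xs) \<and> card ((\<phi>(e := a)) ` cycle_edges (u#v#xs)) \<le> 2"

definition S :: "'a list \<Rightarrow> 'a set set" where
  "S xs = cycle_edges (u#v#xs) - {Ed (u#v#xs) 0, Ed (u#v#xs) 1, Ed (u#v#xs) 2}"

definition W :: "nat \<Rightarrow> 'a list set" where "W m = {ys. length ys = m \<and> nbw E u v ys}"

definition Xs :: "'a list set" where
  "Xs = {xs. length xs \<in> (\<lambda>i. 2*i) ` {k..card V} \<and> nbw E u v xs \<and> S xs \<subseteq> F \<and> length xs \<le> card (S xs) + 1}"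

definition enc where
  "enc p = (let xs = (SOME xs. wit (fst p) (snd p) xs) in (xs, restrict (fst p) (F - S xs)))"

lemma bad_wit:
  assumes p: "p \<in> Bad" shows "\<exists>xs. wit (fst p) (snd p) xs"
proof -
  obtain \<phi> a where p': "p = (\<phi>,a)" by (cases p)
  have \<phi>: "\<phi> \<in> Col F" and a: "a \<in> Good \<phi>" using p p' unfolding Bad_def GP_def by auto
  let ?\<psi> = "\<phi>(e := a)"
  have nc: "?\<psi> \<notin> Col (insert e F)" using p p' unfolding Bad_def ext_def by simp
  obtain cs where cs: "is_cycle V (insert e F) cs" "\<not> 3 \<le> card (?\<psi> ` cycle_edges cs)"
    using nc psi_Pi[OF \<phi> a] psi_proper[OF \<phi> a] unfolding Col_def by blast
  have ecs: "e \<in> cycle_edges cs"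
  proof (rule ccontr)
    assume ne: "e \<notin> cycle_edges cs"
    then have sub: "cycle_edges cs \<subseteq> F" using cs(1) unfolding is_cycle_def by blast
    then have "is_cycle V F cs" using cs(1) unfolding is_cycle_def by blast
    then have "3 \<le> card (\<phi> ` cycle_edges cs)" using \<phi> unfolding Col_def by blast
    moreover have "?\<psi> ` cycle_edges cs = \<phi> ` cycle_edges cs"
      by (rule image_cong) (use ne in auto)
    ultimately show False using cs(2) by simp
  qed
  obtain xs where xs: "is_cycle V (insert e F) (u#v#xs)" "cycle_edges (u#v#xs) = cycle_edges cs"
    using normalize_cycle[OF cs(1) ecs[unfolded euv] uv] by blast
  have "wit \<phi> a xs" unfolding wit_def using xs cs(2) by simp
  thus ?thesis using p' by auto
qed

lemma wit_basic:
  assumes pg: "(\<phi>,a) \<in> GP" and wt: "wit \<phi> a xs"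
  defines "w \<equiv> u#v#xs"
  shows "distinct w" "length w \<ge> 3" "Ed w 0 = e"
    "\<And>j. 0 < j \<Longrightarrow> j < length w \<Longrightarrow> Ed w j \<in> F"
    "\<And>j. j < length w \<Longrightarrow> (\<phi>(e := a)) (Ed w j) = (if even j then a else \<phi> (Ed w 1))"
    "even (length w)"
    "\<And>j. 0 < j \<Longrightarrow> j < length w \<Longrightarrow> (\<phi>(e := a)) (Ed w j) = \<phi> (Ed w j)"
proof -
  have \<phi>: "\<phi> \<in> Col F" and a: "a \<in> Good \<phi>" using pg unfolding GP_def by auto
  have cyc: "is_cycle V (insert e F) w" and two: "card ((\<phi>(e := a)) ` cycle_edges w) \<le> 2"
    using wt unfolding wit_def w_def by auto
  show d: "distinct w" and n: "length w \<ge> 3" using cyc unfolding is_cycle_def by auto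
  have sub: "cycle_edges w \<subseteq> insert e F" using cyc unfolding is_cycle_def by auto
  show e0: "Ed w 0 = e" unfolding Ed_def w_def euv by simp
  have inj: "inj_on (Ed w) {..<length w}" using inj_Ed[OF d n] .
  show inF: "\<And>j. 0 < j \<Longrightarrow> j < length w \<Longrightarrow> Ed w j \<in> F"
  proof -
    fix j assume j: "0 < j" "j < length w"
    have "Ed w j \<in> cycle_edges w" using j unfolding cycle_edges_Ed by auto
    moreover have "Ed w j \<noteq> Ed w 0"
    proof
      assume "Ed w j = Ed w 0"
      moreover have "j \<in> {..<length w}" "0 \<in> {..<length w}" using j by auto
      ultimately have "j = 0" using inj unfolding inj_on_def by blast
      thus False using j by simp
    qed
    ultimately show "Ed w j \<in> F" using sub e0 by auto
  qed
  show eqphi: "\<And>j. 0 < j \<Longrightarrow> j < length w \<Longrightarrow> (\<phi>(e := a)) (Ed w j) = \<phi> (Ed w j)"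
    using inF eF by fastforce
  have alt: "\<forall>i < length w. (\<phi>(e := a)) (Ed w i) = (if even i then (\<phi>(e := a)) (Ed w 0) else (\<phi>(e := a)) (Ed w 1))"
    and ev: "even (length w)"
    using alternation[OF d n psi_proper[OF \<phi> a] sub two] by auto
  show "even (length w)" using ev .
  have 1: "(\<phi>(e := a)) (Ed w 1) = \<phi> (Ed w 1)" using eqphi[of 1] n by simp
  show "\<And>j. j < length w \<Longrightarrow> (\<phi>(e := a)) (Ed w j) = (if even j then a else \<phi> (Ed w 1))"
    using alt e0 1 by simp
qed

lemma card3: "card {x,y,z::'b} \<le> 3"
  by (simp add: card_insert_if)

lemma wit_Xs:
  assumes pg: "(\<phi>,a) \<in> GP" and wt: "wit \<phi> a xs"
  shows "xs \<in> Xs"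
proof -
  define w where "w = u#v#xs"
  note B = wit_basic[OF pg wt, folded w_def]
  have \<phi>: "\<phi> \<in> Col F" and a: "a \<in> Good \<phi>" using pg unfolding GP_def by auto
  have cyc: "is_cycle V (insert e F) w" using wt unfolding wit_def w_def by auto
  have cycE: "is_cycle V E w" using is_cycle_mono[OF cyc] FE eE by blast
  let ?n = "length w"
  have n_girth: "?n \<ge> 2*l+1" using girth cycE unfolding girth_at_least_def by blast
  have n_ne4: "?n \<noteq> 4"
  proof
    assume n4: "?n = 4"
    then have lx: "length xs = 2" unfolding w_def by simp
    then have xs2: "xs = [xs!0, xs!1]" by (cases xs; cases "tl xs") auto
    define x1 where "x1 = xs!0"
    define x2 where "x2 = xs!1"
    have ww: "w = [u,v,x1,x2]" unfolding w_def x1_def x2_def using xs2 by simp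
    have E1: "Ed w 1 = {v,x1}" unfolding ww Ed_def by simp
    have E2': "Ed w 2 = {x1,x2}" unfolding ww Ed_def by simp
    have E3: "Ed w 3 = {u,x2}" unfolding ww Ed_def by auto
    have f1: "{v,x1} \<in> F" using B(4)[of 1] n4 E1 by simp
    have f2: "{x1,x2} \<in> F" using B(4)[of 2] n4 E2' by simp
    have f3: "{u,x2} \<in> F" using B(4)[of 3] n4 E3 by simp
    have c3: "\<phi> {u,x2} = \<phi> {v,x1}" using B(5)[of 3] B(7)[of 3] n4 E1 E3 by simp
    have c2: "\<phi> {x1,x2} = a" using B(5)[of 2] B(7)[of 2] n4 E2' by simp
    have "(x1,x2) \<in> Pr \<phi>" unfolding Pr_def using f1 f2 f3 c3 by simp
    then have "a \<in> B4 \<phi>" unfolding B4_def using c2 by force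
    thus False using a unfolding Good_def by blast
  qed
  have n6: "?n \<ge> 6" using B(2) B(6) n_ne4 by presburger
  have n2l: "?n \<ge> 2*l+2" using n_girth B(6) by presburger
  have nV: "?n \<le> card V"
  proof -
    have "card (set w) = ?n" using distinct_card[OF B(1)] .
    moreover have "set w \<subseteq> V" using cyc unfolding is_cycle_def by blast
    ultimately show ?thesis using card_mono[OF finV] by metis
  qed
  have lxs: "length xs = ?n - 2" unfolding w_def by simp
  have len: "length xs \<in> (\<lambda>i. 2*i) ` {k..card V}"
  proof
    show "length xs = 2 * (length xs div 2)" using lxs B(6) n6 by presburger
    show "length xs div 2 \<in> {k..card V}" using lxs n6 n2l nV kdef by auto
  qed
  have nb: "nbw E u v xs" using nbw_of_cycle[OF cyc[unfolded w_def]] FE eE by blast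
  have SF: "S xs \<subseteq> F"
  proof
    fix f assume f: "f \<in> S xs"
    then have "f \<in> cycle_edges w" "f \<noteq> Ed w 0" unfolding S_def w_def by auto
    then obtain j where "j < ?n" "f = Ed w j" "j \<noteq> 0" unfolding cycle_edges_Ed by auto
    thus "f \<in> F" using B(4) by blast
  qed
  have cS: "length xs \<le> card (S xs) + 1"
  proof -
    have "card (cycle_edges w) = ?n" using card_cycle_edges[OF B(1) B(2)] .
    moreover have "card (cycle_edges w) - card {Ed w 0, Ed w 1, Ed w 2} \<le> card (S xs)"
      unfolding S_def w_def by (rule diff_card_le_card_Diff) simp
    moreover have "card {Ed w 0, Ed w 1, Ed w 2} \<le> 3" by (rule card3)
    ultimately show ?thesis using lxs n6 by linarith
  qed
  show ?thesis unfolding Xs_def using len nb SF cS by blast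
qed

end


context stp begin

lemma enc_wit:
  assumes p: "p \<in> Bad"
  shows "wit (fst p) (snd p) (fst (enc p))" "enc p = (fst (enc p), restrict (fst p) (F - S (fst (enc p))))"
proof -
  have "wit (fst p) (snd p) (SOME xs. wit (fst p) (snd p) xs)" using someI_ex[OF bad_wit[OF p]] .
  thus "wit (fst p) (snd p) (fst (enc p))" unfolding enc_def Let_def by simp
  show "enc p = (fst (enc p), restrict (fst p) (F - S (fst (enc p))))" unfolding enc_def Let_def by simp
qed

lemma enc_into: "enc ` Bad \<subseteq> Sigma Xs (\<lambda>xs. Col (F - S xs))"
proof
  fix q assume "q \<in> enc ` Bad"
  then obtain p where p: "p \<in> Bad" "q = enc p" by blast
  have pg: "(fst p, snd p) \<in> GP" using p unfolding Bad_def by simp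
  have wt: "wit (fst p) (snd p) (fst (enc p))" using enc_wit[OF p(1)] by blast
  have x: "fst (enc p) \<in> Xs" using wit_Xs[OF pg wt] .
  have \<phi>: "fst p \<in> Col F" using pg unfolding GP_def by auto
  have "restrict (fst p) (F - S (fst (enc p))) \<in> Col (F - S (fst (enc p)))"
    by (rule Col_restrict[OF _ \<phi>]) blast
  then show "q \<in> Sigma Xs (\<lambda>xs. Col (F - S xs))" using x p(2) enc_wit(2)[OF p(1)]
    by (metis SigmaI)
qed

lemma enc_inj: "inj_on enc Bad"
proof (rule inj_onI)
  fix p q assume p: "p \<in> Bad" and q: "q \<in> Bad" and eq: "enc p = enc q"
  obtain \<phi> a where p': "p = (\<phi>,a)" by (cases p)
  obtain \<phi>' a' where q': "q = (\<phi>',a')" by (cases q)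
  define xs where "xs = fst (enc p)"
  have xsq: "xs = fst (enc q)" using eq xs_def by simp
  have pg: "(\<phi>,a) \<in> GP" and qg: "(\<phi>',a') \<in> GP" using p q p' q' unfolding Bad_def by auto
  have wp: "wit \<phi> a xs" using enc_wit(1)[OF p] p' xs_def by simp
  have wq: "wit \<phi>' a' xs" using enc_wit(1)[OF q] q' xsq by simp
  have req: "restrict \<phi> (F - S xs) = restrict \<phi>' (F - S xs)"
    using enc_wit(2)[OF p] enc_wit(2)[OF q] eq p' q' xs_def xsq by (metis prod.inject fst_conv)
  define w where "w = u#v#xs"
  note Bp = wit_basic[OF pg wp, folded w_def]
  note Bq = wit_basic[OF qg wq, folded w_def]
  let ?n = "length w"
  have n6: "?n \<ge> 3" using Bp(2) .
  have agree: "\<phi> f = \<phi>' f" if "f \<in> F - S xs" for f using fun_cong[OF req, of f] that by simp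
  have notS: "Ed w j \<notin> S xs" if "j \<le> 2" for j
    using that unfolding S_def w_def by (auto simp: le_Suc_eq numeral_2_eq_2)
  have b: "\<phi> (Ed w 1) = \<phi>' (Ed w 1)" using agree Bp(4)[of 1] notS[of 1] n6 by simp
  have len_ge: "?n \<ge> 4" using Bp(2) Bp(6) by presburger
  have a2: "\<phi> (Ed w 2) = a" using Bp(5)[of 2] Bp(7)[of 2] len_ge by simp
  have a2': "\<phi>' (Ed w 2) = a'" using Bq(5)[of 2] Bq(7)[of 2] len_ge by simp
  have aa: "a = a'" using a2 a2' agree Bp(4)[of 2] notS[of 2] len_ge by simp
  have "\<phi> = \<phi>'"
  proof
    fix f show "\<phi> f = \<phi>' f"
    proof (cases "f \<in> F")
      case False
      have "\<phi> \<in> F \<rightarrow>\<^sub>E {..<N}" "\<phi>' \<in> F \<rightarrow>\<^sub>E {..<N}" using pg qg unfolding GP_def Col_def by auto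
      thus ?thesis using False PiE_arb by metis
    next
      case True
      show ?thesis
      proof (cases "f \<in> S xs")
        case False thus ?thesis using True agree by blast
      next
        case inS: True
        then have "f \<in> cycle_edges w" "f \<noteq> Ed w 0" unfolding S_def w_def by auto
        then obtain j where j: "j < ?n" "f = Ed w j" "j \<noteq> 0" unfolding cycle_edges_Ed by auto
        have "\<phi> f = (if even j then a else \<phi> (Ed w 1))" using Bp(5)[of j] Bp(7)[of j] j by simp
        moreover have "\<phi>' f = (if even j then a' else \<phi>' (Ed w 1))" using Bq(5)[of j] Bq(7)[of j] j by simp
        ultimately show ?thesis using aa b by simp
      qed
    qed
  qed
  thus "p = q" using p' q' aa by simp
qed

lemma finW: "finite (W m)" and cardW: "card (W m) \<le> d^m"
  using walks_card[OF g deg, of u v m] eE euv unfolding W_def by auto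

lemma Xs_sub: "Xs \<subseteq> (\<Union>i\<in>{k..card V}. W (2*i))"
  unfolding Xs_def W_def by auto

lemma finXs: "finite Xs"
  using Xs_sub finW finite_subset by (metis (no_types, lifting) finite_UN_I finite_atLeastAtMost)

lemma bad_bound:
  assumes Q: "\<forall>S' \<subseteq> F. lam ^ card S' * card (Col (F - S')) \<le> card (Col F)"
  shows "real (card Bad) \<le> real (card (Col F)) * real d * (\<tau>^(2*k-1) / (1 - \<tau>^2))"
proof -
  define C where "C = real (card (Col F))"
  have C0: "C \<ge> 0" unfolding C_def by simp
  have l1: "lam \<ge> 1" using lam_ge1 .
  have fC: "\<And>xs. finite (Col (F - S xs))" by (intro finCol) (use FE in blast)
  have finT: "finite (Sigma Xs (\<lambda>xs. Col (F - S xs)))"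
    using finXs fC by (intro finite_SigmaI) auto
  have "card Bad \<le> card (Sigma Xs (\<lambda>xs. Col (F - S xs)))"
    using card_inj_on_le[OF enc_inj enc_into finT] .
  also have "\<dots> = (\<Sum>xs\<in>Xs. card (Col (F - S xs)))"
    using finXs fC by (intro card_SigmaI) auto
  finally have "real (card Bad) \<le> (\<Sum>xs\<in>Xs. real (card (Col (F - S xs))))"
    by (metis of_nat_le_iff of_nat_sum)
  also have "\<dots> \<le> (\<Sum>xs\<in>Xs. C / lam ^ (length xs - 1))"
  proof (rule sum_mono)
    fix xs assume xs: "xs \<in> Xs"
    have SF: "S xs \<subseteq> F" and cs: "length xs - 1 \<le> card (S xs)" using xs unfolding Xs_def by auto
    have "lam ^ card (S xs) * card (Col (F - S xs)) \<le> C" using Q SF unfolding C_def by blast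
    moreover have "lam ^ (length xs - 1) \<le> lam ^ card (S xs)" using power_increasing[OF cs l1] .
    ultimately have "lam ^ (length xs - 1) * card (Col (F - S xs)) \<le> C"
    proof -
      assume h1: "lam ^ card (S xs) * card (Col (F - S xs)) \<le> C" and h2: "lam ^ (length xs - 1) \<le> lam ^ card (S xs)"
      have "lam ^ (length xs - 1) * card (Col (F - S xs)) \<le> lam ^ card (S xs) * card (Col (F - S xs))"
        using h2 by (rule mult_right_mono) simp
      thus ?thesis using h1 by linarith
    qed
    moreover have "lam ^ (length xs - 1) > 0" using l1 by simp
    ultimately show "real (card (Col (F - S xs))) \<le> C / lam ^ (length xs - 1)"
      by (simp add: field_simps)
  qed
  also have "\<dots> \<le> (\<Sum>xs\<in>(\<Union>i\<in>{k..card V}. W (2*i)). C / lam ^ (length xs - 1))"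
    by (rule sum_mono2) (use finW Xs_sub C0 l1 in auto)
  also have "\<dots> = (\<Sum>i\<in>{k..card V}. (\<Sum>xs\<in>W (2*i). C / lam ^ (length xs - 1)))"
  proof (rule sum.UNION_disjoint)
    show "finite {k..card V}" by simp
    show "\<forall>i\<in>{k..card V}. finite (W (2 * i))" using finW by blast
    show "\<forall>i\<in>{k..card V}. \<forall>j\<in>{k..card V}. i \<noteq> j \<longrightarrow> W (2 * i) \<inter> W (2 * j) = {}"
      unfolding W_def by auto
  qed
  also have "\<dots> = (\<Sum>i\<in>{k..card V}. real (card (W (2*i))) * (C / lam ^ (2*i - 1)))"
    by (rule sum.cong) (auto simp: W_def)
  also have "\<dots> \<le> (\<Sum>i\<in>{k..card V}. C * real d * \<tau>^(2*i-1))"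
  proof (rule sum_mono)
    fix i assume i: "i \<in> {k..card V}"
    then have i1: "i \<ge> 1" using kdef by auto
    have dpos: "real d > 0" using d1 by simp
    have "real (card (W (2*i))) \<le> real d ^ (2*i)" using cardW[of "2*i"] by (metis of_nat_le_iff of_nat_power)
    moreover have "C / lam ^ (2*i - 1) \<ge> 0" using C0 l1 by simp
    ultimately have "real (card (W (2*i))) * (C / lam ^ (2*i - 1)) \<le> real d ^ (2*i) * (C / lam ^ (2*i - 1))"
      by (rule mult_right_mono)
    also have "\<dots> = C * real d * \<tau>^(2*i-1)"
    proof -
      have ee: "Suc (2*i-1) = 2*i" using i1 by simp
      have "real d * real d ^ (2*i-1) = real d ^ (Suc (2*i-1))" by simp
      then have e1: "real d ^ (2*i) = real d * real d ^ (2*i-1)" unfolding ee by simp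
      have e2: "lam ^ (2*i-1) = real d ^ (2*i-1) / \<tau>^(2*i-1)" unfolding lam_def by (simp add: power_divide)
      show ?thesis unfolding e1 e2 using dpos tau by (simp add: field_simps)
    qed
    finally show "real (card (W (2*i))) * (C / lam ^ (2*i - 1)) \<le> C * real d * \<tau>^(2*i-1)" .
  qed
  also have "\<dots> = C * real d * (\<Sum>i\<in>{k..card V}. \<tau>^(2*i-1))" by (simp add: sum_distrib_left)
  also have "\<dots> \<le> C * real d * (\<tau>^(2*k-1) / (1 - \<tau>^2))"
    using geom_bound[OF tau, of k "card V"] kdef C0 by (intro mult_left_mono) auto
  finally show ?thesis unfolding C_def .
qed

lemma step_stp:
  assumes Q: "\<forall>S' \<subseteq> F. lam ^ card S' * card (Col (F - S')) \<le> card (Col F)"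
  shows "lam * card (Col F) \<le> card (Col (insert e F))"
proof -
  define C where "C = real (card (Col F))"
  define T where "T = \<tau>^(2*k-1) / (1 - \<tau>^2)"
  have C0: "C \<ge> 0" unfolding C_def by simp
  have "real N \<ge> (2 + 1/\<tau> + T) * real d" using Nbig unfolding T_def .
  then have key: "real N - 2 * real d - real d * T \<ge> lam" unfolding lam_def by (simp add: field_simps)
  have "real (card (Col (insert e F))) \<ge> real (card GP) - real (card Bad)" by (rule card_lower)
  moreover have "real (card GP) \<ge> C * (real N - 2 * real d)" using card_GP unfolding C_def .
  moreover have "real (card Bad) \<le> C * real d * T" using bad_bound[OF Q] unfolding C_def T_def .
  ultimately have "real (card (Col (insert e F))) \<ge> C * (real N - 2 * real d - real d * T)"
    by (simp add: algebra_simps)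
  moreover have "C * (real N - 2 * real d - real d * T) \<ge> C * lam" using key C0 by (simp add: mult_left_mono)
  ultimately show ?thesis unfolding C_def by (simp add: mult.commute)
qed

end


context ac begin

lemma P_all: "\<forall>F \<subseteq> E. \<forall>e\<in>E-F. lam * card (Col F) \<le> card (Col (insert e F))"
proof -
  have "\<forall>F. card F = n \<longrightarrow> F \<subseteq> E \<longrightarrow> (\<forall>e\<in>E-F. lam * card (Col F) \<le> card (Col (insert e F)))" for n
  proof (induction n rule: less_induct)
    case (less n)
    show ?case
    proof (intro allI impI ballI)
      fix F e assume cF: "card F = n" and FE: "F \<subseteq> E" and e: "e \<in> E - F"
      have P: "\<forall>G \<subseteq> E. card G < card F \<longrightarrow> (\<forall>e\<in>E-G. lam * card (Col G) \<le> card (Col (insert e G)))"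
        using less.IH cF by blast
      have Q: "\<forall>S' \<subseteq> F. lam ^ card S' * card (Col (F - S')) \<le> card (Col F)"
        using Q_lemma[OF P FE] by blast
      have "card e = 2" using E2 e by blast
      then obtain u v where uv: "e = {u,v}" "u \<noteq> v" by (auto simp: card_2_iff)
      interpret s: stp V E N d \<tau> k l F e u v
        by unfold_locales (use FE e uv in auto)
      show "lam * card (Col F) \<le> card (Col (insert e F))" using s.step_stp[OF Q] .
    qed
  qed
  thus ?thesis by blast
qed

lemma Col_E_ne: "Col E \<noteq> {}"
proof -
  have P: "\<forall>G \<subseteq> E. card G < card E \<longrightarrow> (\<forall>e\<in>E-G. lam * card (Col G) \<le> card (Col (insert e G)))"
    using P_all by blast
  have "lam ^ card E * card (Col (E - E)) \<le> card (Col E)" using Q_lemma[OF P] by blast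
  moreover have "card (Col (E - E)) = 1" using Col_empty by simp
  moreover have "lam ^ card E > 0" using lam_ge1 by simp
  ultimately have "card (Col E) > 0" by simp
  thus ?thesis by auto
qed

end

theorem theorem8:
  fixes l :: nat
  assumes "l \<ge> 1"
  defines "k \<equiv> max 2 l"
  shows "(\<exists>!\<tau>::real. 0 < \<tau> \<and> \<tau> < 1 \<and> polyP k \<tau> = 0) \<and>
    (\<forall>\<tau>::real. 0 < \<tau> \<and> \<tau> < 1 \<and> polyP k \<tau> = 0 \<longrightarrow>
      (\<forall>(V::'a set) E. graph V E \<and> max_degree V E \<ge> 2 \<and> girth_at_least V E (2*l+1) \<longrightarrow>
         acyclic_colorable V E
           (nat \<lceil>(2 + (\<tau>^(2*k) - \<tau>^2 + 1) / (\<tau> - \<tau>^3)) * (real (max_degree V E) - 1)\<rceil>)))"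
proof (intro conjI allI impI)
  have k2: "k \<ge> 2" unfolding k_def by simp
  show "\<exists>!\<tau>::real. 0 < \<tau> \<and> \<tau> < 1 \<and> polyP k \<tau> = 0" using polyP_unique_root[OF k2] .
  fix \<tau> :: real and V :: "'a set" and E
  assume t: "0 < \<tau> \<and> \<tau> < 1 \<and> polyP k \<tau> = 0"
    and G: "graph V E \<and> max_degree V E \<ge> 2 \<and> girth_at_least V E (2*l+1)"
  define D where "D = max_degree V E"
  define d where "d = D - 1"
  define N where "N = nat \<lceil>(2 + (\<tau>^(2*k) - \<tau>^2 + 1) / (\<tau> - \<tau>^3)) * (real D - 1)\<rceil>"
  have D2: "D \<ge> 2" using G D_def by simp
  have Dd: "Suc d = D" using D2 d_def by simp
  have "real D = real d + 1" using Dd by simp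
  then have rd: "real D - 1 = real d" by simp
  have finV: "finite V" using G unfolding graph_def by blast
  have deg: "\<forall>x\<in>V. degree E x \<le> Suc d"
  proof
    fix x assume "x \<in> V"
    then have "degree E x \<in> insert 0 (degree E ` V)" by blast
    moreover have "finite (insert 0 (degree E ` V))" using finV by simp
    ultimately have "degree E x \<le> Max (insert 0 (degree E ` V))" by (rule Max_ge[rotated])
    thus "degree E x \<le> Suc d" unfolding Dd D_def max_degree_def .
  qed
  have tau: "0 < \<tau>" "\<tau> < 1" using t by auto
  have gam: "(\<tau>^(2*k) - \<tau>^2 + 1) / (\<tau> - \<tau>^3) = 1/\<tau> + \<tau>^(2*k-1)/(1-\<tau>^2)"
  proof -
    have "\<tau>^2 < 1" using tau by (simp add: power_less_one_iff)
    then have t2: "1 - \<tau>^2 \<noteq> 0" by simp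
    have t3: "\<tau> - \<tau>^3 = \<tau> * (1 - \<tau>^2)" by (simp add: algebra_simps power2_eq_square power3_eq_cube)
    have e: "Suc (2*k-1) = 2*k" using k2 by simp
    have "\<tau> * \<tau>^(2*k-1) = \<tau>^(Suc (2*k-1))" by simp
    then have tk: "\<tau>^(2*k) = \<tau> * \<tau>^(2*k-1)" unfolding e by simp
    show ?thesis unfolding t3 tk using tau t2 by (simp add: field_simps power2_eq_square)
  qed
  have Nbig: "real N \<ge> (2 + 1/\<tau> + \<tau>^(2*k-1)/(1-\<tau>^2)) * real d"
    unfolding N_def gam rd using real_nat_ceiling_ge by (simp add: add.assoc)
  interpret a: ac V E N d \<tau> k l
    by unfold_locales (use G deg D2 d_def k_def tau Nbig in auto)
  obtain c where c: "c \<in> a.Col E" using a.Col_E_ne by blast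
  have "c ` E \<subseteq> {..<N}" using c unfolding a.Col_def by auto
  moreover have "acyclic_edge_coloring V E c" using c unfolding a.Col_def acyclic_edge_coloring_def by auto
  ultimately show "acyclic_colorable V E (nat \<lceil>(2 + (\<tau>^(2*k) - \<tau>^2 + 1) / (\<tau> - \<tau>^3)) * (real (max_degree V E) - 1)\<rceil>)"
    unfolding acyclic_colorable_def N_def[symmetric] D_def[symmetric] by blast
qed


end
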